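(* Let $G$ be a finite directed graph and $R\subseteq V(G)$. Let $F_i$ and $F_k$ be maximal faces of $\mathrm{DT}_R(G)$, and let $(x\rightarrow y)\in F_i\setminus F_k$ be an edge that is nice in $\mathrm{DT}_R(G)$. Then there is a maximal face $F_j$ of $\mathrm{DT}_R(G)$ and an $e\in F_k$ such that $F_i\cap F_k\subseteq F_j\cap F_k=F_k\setminus\{e\}$.
   Context: A directed forest in $G$ is a set of edges of $G$ which, viewed as a graph on $V(G)$, is acyclic and has at most one edge directed to each vertex; its roots are the vertices with no forest edge directed to them. $\mathrm{DT}(G)$ is the simplicial complex with vertex set $E(G)$ whose simplices are the directed forests; $\mathrm{DT}_R(G)$ is the subcomplex generated by the directed forests with root set exactly $R$. An edge $(x\rightarrow y)$ of $G$ is nice in a subcomplex $\Delta$ of $\mathrm{DT}(G)$ if (i) there is an edge $(z\rightarrow y)$ in $\Delta$ with $z\ne x$, and (ii) every forest $F\in\Delta$ without an edge directed to $y$ satisfies $F\cup\{(x\rightarrow y)\}\in\Delta$. *)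

theory Defs
  imports Main
begin

text \<open>A finite directed graph G is given by a vertex set V and an edge set
  E \<subseteq> V \<times> V; an edge (x \<rightarrow> y) is the pair (x, y).\<close>

definition dforest :: "('a \<times> 'a) set \<Rightarrow> ('a \<times> 'a) set \<Rightarrow> bool" where
  "dforest E F \<longleftrightarrow> F \<subseteq> E \<and> acyclic F \<and>
     (\<forall>x z y. (x, y) \<in> F \<and> (z, y) \<in> F \<longrightarrow> x = z)"

definition roots :: "'a set \<Rightarrow> ('a \<times> 'a) set \<Rightarrow> 'a set" where
  "roots V F = {v \<in> V. \<forall>x. (x, v) \<notin> F}"

definition DT :: "('a \<times> 'a) set \<Rightarrow> ('a \<times> 'a) set set" where
  "DT E = {F. dforest E F}"

definition DT_R :: "'a set \<Rightarrow> ('a \<times> 'a) set \<Rightarrow> 'a set \<Rightarrow> ('a \<times> 'a) set set" where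
  "DT_R V E R = {F. \<exists>F'. dforest E F' \<and> roots V F' = R \<and> F \<subseteq> F'}"

definition maximal_face :: "('a \<times> 'a) set set \<Rightarrow> ('a \<times> 'a) set \<Rightarrow> bool" where
  "maximal_face \<Delta> F \<longleftrightarrow> F \<in> \<Delta> \<and> (\<forall>F'\<in>\<Delta>. F \<subseteq> F' \<longrightarrow> F' = F)"

definition nice :: "('a \<times> 'a) set \<Rightarrow> ('a \<times> 'a) set set \<Rightarrow> 'a \<Rightarrow> 'a \<Rightarrow> bool" where
  "nice E \<Delta> x y \<longleftrightarrow> (x, y) \<in> E \<and>
     (\<exists>z. z \<noteq> x \<and> {(z, y)} \<in> \<Delta>) \<and>
     (\<forall>F\<in>\<Delta>. (\<forall>w. (w, y) \<notin> F) \<longrightarrow> insert (x, y) F \<in> \<Delta>)"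

end

theory Submission
  imports Defs
begin

lemma cover_eq:
  assumes "dforest E G" "roots V G = R" "E \<subseteq> V \<times> V" "H \<subseteq> G"
    and "\<forall>v\<in>V - R. \<exists>u. (u, v) \<in> H"
  shows "H = G"
proof
  show "G \<subseteq> H"
  proof
    fix p assume p: "p \<in> G"
    obtain a b where ab: "p = (a, b)" by (cases p)
    have "b \<in> V" using p ab assms(1,3) unfolding dforest_def by auto
    moreover have "b \<notin> R" using p ab assms(2) unfolding roots_def by auto
    ultimately obtain u where u: "(u, b) \<in> H" using assms(5) by auto
    hence "u = a" using p ab assms(1,4) unfolding dforest_def by blast
    thus "p \<in> H" using u ab by simp
  qed
qed (use assms in auto)

lemma maxchar:
  assumes "E \<subseteq> V \<times> V"
  shows "maximal_face (DT_R V E R) F \<longleftrightarrow> dforest E F \<and> roots V F = R"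
proof
  assume m: "maximal_face (DT_R V E R) F"
  then obtain F' where F': "dforest E F'" "roots V F' = R" "F \<subseteq> F'"
    unfolding maximal_face_def DT_R_def by auto
  have "F' \<in> DT_R V E R" using F' unfolding DT_R_def by auto
  hence "F' = F" using m F'(3) unfolding maximal_face_def by auto
  thus "dforest E F \<and> roots V F = R" using F' by simp
next
  assume f: "dforest E F \<and> roots V F = R"
  have "F \<in> DT_R V E R" using f unfolding DT_R_def by auto
  moreover have "F2 = F" if t: "F2 \<in> DT_R V E R" "F \<subseteq> F2" for F2
  proof -
    obtain F3 where F3: "dforest E F3" "roots V F3 = R" "F2 \<subseteq> F3"
      using t(1) unfolding DT_R_def by auto
    have "\<forall>v\<in>V - R. \<exists>u. (u, v) \<in> F" using f unfolding roots_def by auto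
    hence "F = F3" using cover_eq[OF F3(1,2) assms] t(2) F3(3) by blast
    thus ?thesis using t(2) F3(3) by simp
  qed
  ultimately show "maximal_face (DT_R V E R) F" unfolding maximal_face_def by blast
qed

theorem lemma2p8:
  fixes V :: "'a set" and E :: "('a \<times> 'a) set" and R :: "'a set"
  assumes "finite V" and "E \<subseteq> V \<times> V" and "R \<subseteq> V"
    and "maximal_face (DT_R V E R) Fi" and "maximal_face (DT_R V E R) Fk"
    and "(x, y) \<in> Fi - Fk"
    and "nice E (DT_R V E R) x y"
  shows "\<exists>Fj e. maximal_face (DT_R V E R) Fj \<and> e \<in> Fk \<and>
           Fi \<inter> Fk \<subseteq> Fj \<inter> Fk \<and> Fj \<inter> Fk = Fk - {e}"
proof -
  have Fi: "dforest E Fi" "roots V Fi = R" using assms(4) maxchar[OF assms(2)] by auto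
  have Fk: "dforest E Fk" "roots V Fk = R" using assms(5) maxchar[OF assms(2)] by auto
  have xy: "(x, y) \<in> Fi" "(x, y) \<notin> Fk" using assms(6) by auto
  have yV: "y \<in> V" using xy Fi(1) assms(2) unfolding dforest_def by auto
  have "y \<notin> R" using xy Fi(2) unfolding roots_def by auto
  then obtain z where z: "(z, y) \<in> Fk" using Fk(2) yV unfolding roots_def by auto
  have zx: "z \<noteq> x" using z xy by auto
  define Fj where "Fj = insert (x, y) (Fk - {(z, y)})"
  have "Fk - {(z, y)} \<in> DT_R V E R" using Fk unfolding DT_R_def by auto
  moreover have "\<forall>w. (w, y) \<notin> Fk - {(z, y)}" using Fk(1) z unfolding dforest_def by auto
  ultimately have "Fj \<in> DT_R V E R" using assms(7) unfolding nice_def Fj_def by auto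
  then obtain F' where F': "dforest E F'" "roots V F' = R" "Fj \<subseteq> F'"
    unfolding DT_R_def by auto
  have cov: "\<forall>v\<in>V - R. \<exists>u. (u, v) \<in> Fj"
  proof
    fix v assume v: "v \<in> V - R"
    then obtain u where u: "(u, v) \<in> Fk" using Fk(2) unfolding roots_def by auto
    show "\<exists>u. (u, v) \<in> Fj"
    proof (cases "v = y")
      case True thus ?thesis unfolding Fj_def by auto
    next
      case False thus ?thesis using u unfolding Fj_def by auto
    qed
  qed
  have "Fj = F'" using cover_eq[OF F'(1,2) assms(2) F'(3) cov] .
  hence mj: "maximal_face (DT_R V E R) Fj" using F' maxchar[OF assms(2)] by simp
  have ezi: "(z, y) \<notin> Fi" using Fi(1) xy zx unfolding dforest_def by blast
  have "Fj \<inter> Fk = Fk - {(z, y)}" using xy unfolding Fj_def by auto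
  moreover have "Fi \<inter> Fk \<subseteq> Fj \<inter> Fk" using ezi calculation by auto
  ultimately show ?thesis using mj z by blast
qed

end
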